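(* Let $T$ be a tree with $n>2$ vertices and let Algorithm 2 be applied to $T$ with gravity root $r$ (placed at the origin). Let $u$ be a vertex drawn on the $Y$-axis (i.e., with $x$-coordinate $0$), at position $(0,y_u)$, and let $\phi_u=a_2(u)-a_1(u)$. Put $B=(|T_u|-1)\cdot\frac{\pi}{2}\cdot\frac{n-\mathrm{odd}(n)}{n-1}\cdot\frac{1}{\phi_u}$. Then every vertex $w$ of $T_u$, drawn at $(x_w,y_w)$, satisfies $0\le y_w-y_u\le B$ and $|x_w|\le B$. (Equivalently, both the part of the drawing of $T_u$ lying in the closed first quadrant $x\ge0$ and the part lying in the closed second quadrant $x\le0$ fit in grids of side-length $B$.)
   Context: A vertex $r$ of an $n$-vertex tree $T$ is a gravity root if every connected component of $T\setminus r$ has at most $\frac{n}{2}$ vertices. $\mathrm{odd}(n)=1$ if $n$ is odd, $0$ otherwise. $T_v$ is the subtree rooted at $v$, $|T_v|$ its number of vertices. Strategy 1: for a non-leaf vertex $u$ with assigned $a_1(u)<a_2(u)$ and children $v_1,\dots,v_m$ in order, set $a_1(v_1)=a_1(u)$, $a_1(v_i)=a_2(v_{i-1})$ for $1<i\le m$, and $a_2(v_i)=a_1(v_i)+(a_2(u)-a_1(u))\cdot\frac{|T_{v_i}|}{|T_u|-1}$. Point rule $P_1(\theta_1,\theta_2)$ for $0\le\theta_1<\theta_2\le\frac{\pi}{2}$, with $d=\lceil\frac{1}{\theta_2-\theta_1}\rceil$: (i) if $\theta_2-\theta_1>\frac{\pi}{4}$: $(1,1)$; (ii) if $\arctan(\frac12)<\theta_2-\theta_1\le\frac{\pi}{4}$: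 $(1,2)$ if $\theta_1\ge\frac{\pi}{4}$, $(1,1)$ if $\arctan(\frac12)\le\theta_1<\frac{\pi}{4}$, $(2,1)$ if $\theta_1<\arctan(\frac12)$; (iii) if $\theta_2-\theta_1\le\arctan(\frac12)$: $(d,\lfloor\tan(\theta_1)d+1\rfloor)$ if $\theta_2\le\frac{\pi}{4}$, $(1,1)$ if $\theta_1<\frac{\pi}{4}<\theta_2$, $(\lfloor\tan(\frac{\pi}{2}-\theta_2)d+1\rfloor,d)$ if $\theta_1\ge\frac{\pi}{4}$. Point rule $P_2(\beta_1,\beta_2)$ for $0\le\beta_1<\beta_2\le\pi$: $(0,1)$ if $\beta_1<\frac{\pi}{2}<\beta_2$; $P_1(\beta_1,\beta_2)$ if $\beta_2\le\frac{\pi}{2}$; $(-x,y)$ with $(x,y)=P_1(\pi-\beta_2,\pi-\beta_1)$ if $\beta_1\ge\frac{\pi}{2}$. Algorithm 2 (input: a tree $T$, possibly with a cyclic order of neighbors at each vertex): choose a gravity root $r$ and root $T$ at $r$ (children ordered according to the given embedding, if any); set $a_1(r)=0$, $a_2(r)=\pi$, assign angles to all other vertices top-down by Strategy 1; place $r$ at $(0,0)$; top-down, place each child $v$ of an already placed vertex $u$ at (position of $u$) $+P_2(a_1(v),a_2(v))$. *)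

theory Defs
  imports Complex_Main
begin

text \<open>A tree rooted at r, given by its vertex set V and a parent function par
  (with the convention par r = r). The undirected tree has edges {v, par v}, v ~= r.\<close>
definition rooted_tree :: "'a set \<Rightarrow> ('a \<Rightarrow> 'a) \<Rightarrow> 'a \<Rightarrow> bool" where
  "rooted_tree V par r \<longleftrightarrow> finite V \<and> r \<in> V \<and> par r = r \<and>
     (\<forall>v\<in>V. par v \<in> V \<and> (\<exists>k. (par ^^ k) v = r))"

definition tree_adj :: "'a set \<Rightarrow> ('a \<Rightarrow> 'a) \<Rightarrow> 'a \<Rightarrow> 'a \<Rightarrow> bool" where
  "tree_adj V par x y \<longleftrightarrow> x \<in> V \<and> y \<in> V \<and> x \<noteq> y \<and> (par x = y \<or> par y = x)"

definition comp_minus :: "'a set \<Rightarrow> ('a \<Rightarrow> 'a) \<Rightarrow> 'a \<Rightarrow> 'a \<Rightarrow> 'a set" where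
  "comp_minus V par r x =
     {y. (\<lambda>a b. tree_adj V par a b \<and> a \<noteq> r \<and> b \<noteq> r)\<^sup>*\<^sup>* x y}"

definition gravity_root :: "'a set \<Rightarrow> ('a \<Rightarrow> 'a) \<Rightarrow> 'a \<Rightarrow> bool" where
  "gravity_root V par r \<longleftrightarrow>
     (\<forall>x\<in>V - {r}. real (card (comp_minus V par r x)) \<le> real (card V) / 2)"

definition subtree :: "'a set \<Rightarrow> ('a \<Rightarrow> 'a) \<Rightarrow> 'a \<Rightarrow> 'a set" where
  "subtree V par v = {w \<in> V. \<exists>k. (par ^^ k) w = v}"

definition children :: "'a set \<Rightarrow> ('a \<Rightarrow> 'a) \<Rightarrow> 'a \<Rightarrow> 'a \<Rightarrow> 'a set" where
  "children V par r u = {v \<in> V - {r}. par v = u}"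

definition oddn :: "nat \<Rightarrow> nat" where
  "oddn n = (if odd n then 1 else 0)"

definition P1 :: "real \<Rightarrow> real \<Rightarrow> real \<times> real" where
  "P1 t1 t2 = (let d = real_of_int \<lceil>1 / (t2 - t1)\<rceil> in
     if t2 - t1 > pi / 4 then (1, 1)
     else if arctan (1/2) < t2 - t1 then
       (if t1 \<ge> pi / 4 then (1, 2) else if arctan (1/2) \<le> t1 then (1, 1) else (2, 1))
     else if t2 \<le> pi / 4 then (d, real_of_int \<lfloor>tan t1 * d + 1\<rfloor>)
     else if t1 < pi / 4 then (1, 1)
     else (real_of_int \<lfloor>tan (pi / 2 - t2) * d + 1\<rfloor>, d))"

definition P2 :: "real \<Rightarrow> real \<Rightarrow> real \<times> real" where
  "P2 b1 b2 = (if b1 < pi / 2 \<and> pi / 2 < b2 then (0, 1)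
     else if b2 \<le> pi / 2 then P1 b1 b2
     else (- fst (P1 (pi - b2) (pi - b1)), snd (P1 (pi - b2) (pi - b1))))"

text \<open>Algorithm 2 with root r and children order chl u (a list of the children of u):
  a1, a2 are the angles assigned by Strategy 1, pos the drawing. These equations
  determine a1, a2, pos uniquely on V.\<close>
definition algorithm2 :: "'a set \<Rightarrow> ('a \<Rightarrow> 'a) \<Rightarrow> 'a \<Rightarrow> ('a \<Rightarrow> 'a list) \<Rightarrow>
    ('a \<Rightarrow> real) \<Rightarrow> ('a \<Rightarrow> real) \<Rightarrow> ('a \<Rightarrow> real \<times> real) \<Rightarrow> bool" where
  "algorithm2 V par r chl a1 a2 pos \<longleftrightarrow>
     (\<forall>u\<in>V. distinct (chl u) \<and> set (chl u) = children V par r u) \<and>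
     a1 r = 0 \<and> a2 r = pi \<and>
     (\<forall>u\<in>V. (chl u \<noteq> [] \<longrightarrow> a1 (chl u ! 0) = a1 u) \<and>
        (\<forall>i. 0 < i \<and> i < length (chl u) \<longrightarrow> a1 (chl u ! i) = a2 (chl u ! (i - 1))) \<and>
        (\<forall>v\<in>set (chl u). a2 v = a1 v + (a2 u - a1 u) *
              real (card (subtree V par v)) / (real (card (subtree V par u)) - 1))) \<and>
     pos r = (0, 0) \<and>
     (\<forall>v\<in>V - {r}. pos v = (fst (pos (par v)) + fst (P2 (a1 v) (a2 v)),
                            snd (pos (par v)) + snd (P2 (a1 v) (a2 v))))"

end

theory Submission imports Defs "HOL-Analysis.Analysis" begin

lemma arctan_half_lt: "arctan (1/2) < pi/6"
proof -
  have "sqrt 3 < sqrt 4" by (subst real_sqrt_less_iff) simp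
  hence "sqrt 3 < 2" by (metis real_sqrt_four)
  hence "1/2 < tan (pi/6)" by (simp add: tan_30 field_simps)
  hence "arctan (1/2) < arctan (tan (pi/6))" by (simp add: arctan_less_iff)
  also have "\<dots> = pi/6" by (rule arctan_tan) (use pi_gt_zero in linarith)+
  finally show ?thesis .
qed

lemma tan_01: assumes "0 \<le> t" "t < pi/4" shows "0 \<le> tan t" "tan t < 1"
proof -
  show "0 \<le> tan t" using assms tan_gt_zero[of t] by (cases "t = 0") auto
  have "tan t < tan (pi/4)" by (rule tan_monotone) (use assms pi_gt_zero in linarith)+
  thus "tan t < 1" by (simp add: tan_45)
qed

lemma floor_part:
  fixes d tt :: real
  assumes "0 \<le> tt" "tt < 1" "d = real_of_int (ceiling e)" "0 < d"
  shows "0 \<le> real_of_int \<lfloor>tt * d + 1\<rfloor>" "real_of_int \<lfloor>tt * d + 1\<rfloor> \<le> d"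
proof -
  have "0 \<le> tt * d" using assms by simp
  thus "0 \<le> real_of_int \<lfloor>tt * d + 1\<rfloor>" by linarith
  have "tt * d < d" using assms by simp
  hence "\<lfloor>tt * d + 1\<rfloor> < ceiling e + 1" using assms(3) by linarith
  thus "real_of_int \<lfloor>tt * d + 1\<rfloor> \<le> d" using assms(3) by linarith
qed

lemma P1_bound:
  fixes t1 t2 c :: real
  assumes "0 \<le> t1" "t1 < t2" "t2 \<le> pi/2" "t2 - t1 \<le> c" "pi/2 \<le> c"
  shows "0 \<le> fst (P1 t1 t2) \<and> 0 \<le> snd (P1 t1 t2) \<and>
         fst (P1 t1 t2) * (t2 - t1) \<le> c \<and> snd (P1 t1 t2) * (t2 - t1) \<le> c"
proof -
  define th where "th = t2 - t1"
  define d where "d = real_of_int \<lceil>1 / th\<rceil>"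
  have thpos: "0 < th" using assms by (simp add: th_def)
  have d1: "1/th \<le> d" unfolding d_def by linarith
  have d2: "d < 1/th + 1" unfolding d_def by linarith
  have dpos: "0 < d" using d1 thpos by (smt (verit) divide_pos_pos)
  have dth: "d * th < 1 + th" using d2 thpos by (simp add: field_simps)
  have pi3: "pi > 3" by (rule pi_gt3)
  have at: "arctan (1/2) < pi/6" by (rule arctan_half_lt)
  show ?thesis
  proof (cases "th > pi/4")
    case True
    then show ?thesis using assms by (simp add: P1_def Let_def th_def)
  next
    case F1: False
    show ?thesis
    proof (cases "arctan (1/2) < th")
      case True
      have "2 * th \<le> c" using F1 assms by linarith
      then show ?thesis using F1 True assms thpos unfolding P1_def Let_def th_def[symmetric]
        by auto
    next
      case F2: False
      have dc: "d * th \<le> c" using dth F2 at pi3 assms by linarith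
      show ?thesis
      proof (cases "t2 \<le> pi/4")
        case True
        have tt: "0 \<le> tan t1" "tan t1 < 1" using tan_01[of t1] assms True by linarith+
        have fl: "0 \<le> real_of_int \<lfloor>tan t1 * d + 1\<rfloor>" "real_of_int \<lfloor>tan t1 * d + 1\<rfloor> \<le> d"
          using floor_part[OF tt d_def dpos] by auto
        have "real_of_int \<lfloor>tan t1 * d + 1\<rfloor> * th \<le> d * th"
          using fl thpos by (simp add: mult_right_mono)
        then show ?thesis using F1 F2 True dc dpos fl unfolding P1_def Let_def th_def[symmetric] d_def[symmetric]
          by auto
      next
        case F3: False
        show ?thesis
        proof (cases "t1 < pi/4")
          case True
          then show ?thesis using F1 F2 F3 assms thpos unfolding P1_def Let_def th_def[symmetric]
            by auto
        next
          case F4: False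
          have tt: "0 \<le> tan (pi/2 - t2)" "tan (pi/2 - t2) < 1" using tan_01[of "pi/2 - t2"] assms F4 by linarith+
          have fl: "0 \<le> real_of_int \<lfloor>tan (pi/2 - t2) * d + 1\<rfloor>" "real_of_int \<lfloor>tan (pi/2 - t2) * d + 1\<rfloor> \<le> d"
            using floor_part[OF tt d_def dpos] by auto
          have "real_of_int \<lfloor>tan (pi/2 - t2) * d + 1\<rfloor> * th \<le> d * th"
            using fl thpos by (simp add: mult_right_mono)
          then show ?thesis using F1 F2 F3 F4 dc dpos fl unfolding P1_def Let_def th_def[symmetric] d_def[symmetric]
            by auto
        qed
      qed
    qed
  qed
qed

lemma P2_bound:
  fixes b1 b2 c :: real
  assumes "0 \<le> b1" "b1 < b2" "b2 \<le> pi" "b2 - b1 \<le> c" "pi/2 \<le> c"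
  shows "0 \<le> snd (P2 b1 b2) \<and> snd (P2 b1 b2) * (b2 - b1) \<le> c \<and> \<bar>fst (P2 b1 b2)\<bar> * (b2 - b1) \<le> c"
proof (cases "b1 < pi / 2 \<and> pi / 2 < b2")
  case True
  then show ?thesis using assms by (simp add: P2_def)
next
  case F1: False
  show ?thesis
  proof (cases "b2 \<le> pi/2")
    case True
    then show ?thesis using P1_bound[OF assms(1,2) True assms(4,5)] F1 by (simp add: P2_def)
  next
    case False
    have h: "0 \<le> pi - b2" "pi - b2 < pi - b1" "pi - b1 \<le> pi/2" "(pi - b1) - (pi - b2) \<le> c"
      using F1 False assms by auto
    have e: "(pi - b1) - (pi - b2) = b2 - b1" by simp
    show ?thesis using P1_bound[OF h(1-3) h(4) assms(5)] F1 False unfolding e by (simp add: P2_def)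
  qed
qed


lemma funpow_fix: "par r = r \<Longrightarrow> (par ^^ k) r = r"
  by (induction k) auto

lemma rt_closed: "rooted_tree V par r \<Longrightarrow> v \<in> V \<Longrightarrow> (par ^^ k) v \<in> V"
  by (induction k) (auto simp: rooted_tree_def)

lemma funpow_mult_cycle: "(par ^^ m) v = v \<Longrightarrow> (par ^^ (m * k)) v = v"
proof (induction k)
  case (Suc k)
  have "(par ^^ (m * Suc k)) v = (par ^^ m) ((par ^^ (m * k)) v)"
    by (simp add: funpow_add)
  with Suc show ?case by simp
qed simp

lemma no_cycle:
  assumes "rooted_tree V par r" "v \<in> V" "1 \<le> m" "(par ^^ m) v = v"
  shows "v = r"
proof -
  obtain k where k: "(par ^^ k) v = r" using assms unfolding rooted_tree_def by blast
  have pr: "par r = r" using assms unfolding rooted_tree_def by blast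
  have "(par ^^ (m * k)) v = v" by (rule funpow_mult_cycle[OF assms(4)])
  moreover have "m * k = (m * k - k) + k" using assms(3) by simp
  hence "(par ^^ (m * k)) v = (par ^^ (m * k - k)) ((par ^^ k) v)"
    by (metis funpow_add comp_apply)
  hence "(par ^^ (m * k)) v = r" using k funpow_fix[of par r, OF pr] by simp
  ultimately show ?thesis by simp
qed

lemma subtree_sub: "subtree V par v \<subseteq> V" by (auto simp: subtree_def)

lemma subtree_finite: "rooted_tree V par r \<Longrightarrow> finite (subtree V par v)"
  using subtree_sub rooted_tree_def finite_subset by metis

lemma self_in_subtree: "v \<in> V \<Longrightarrow> v \<in> subtree V par v"
  unfolding subtree_def by (auto intro: exI[of _ 0])

lemma subtree_root: "rooted_tree V par r \<Longrightarrow> subtree V par r = V"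
  unfolding subtree_def rooted_tree_def by auto

lemma child_subtree:
  assumes rt: "rooted_tree V par r" and v: "v \<in> children V par r u"
  shows "subtree V par v \<subseteq> subtree V par u - {u}"
proof
  fix w assume w: "w \<in> subtree V par v"
  then obtain a where a: "w \<in> V" "(par ^^ a) w = v" unfolding subtree_def by blast
  have pv: "par v = u" "v \<noteq> r" "v \<in> V" using v unfolding children_def by auto
  have s: "(par ^^ Suc a) w = u" using a pv by simp
  hence "w \<in> subtree V par u" using a unfolding subtree_def by blast
  moreover have "w \<noteq> u"
  proof
    assume "w = u"
    have cy: "(par ^^ Suc a) u = u" using s \<open>w = u\<close> by simp
    have "u = r" by (rule no_cycle[OF rt _ _ cy]) (use a \<open>w = u\<close> in auto)
    hence "v = r" using a \<open>w = u\<close> funpow_fix[of par r a] rt unfolding rooted_tree_def by simp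
    thus False using pv by simp
  qed
  ultimately show "w \<in> subtree V par u - {u}" by simp
qed

lemma children_disj_aux:
  assumes rt: "rooted_tree V par r" and c1: "c1 \<in> children V par r u" and c2: "c2 \<in> children V par r u"
    and ne: "c1 \<noteq> c2" and a: "(par ^^ a) w = c1" and b: "(par ^^ b) w = c2" and ab: "a \<le> b"
    and wV: "w \<in> V"
  shows False
proof -
  have p1: "par c1 = u" "c1 \<noteq> r" "c1 \<in> V" using c1 unfolding children_def by auto
  have p2: "par c2 = u" "c2 \<noteq> r" "c2 \<in> V" using c2 unfolding children_def by auto
  have pr: "par r = r" using rt unfolding rooted_tree_def by blast
  have "(par ^^ (b - a)) ((par ^^ a) w) = c2" using b ab by (metis funpow_add comp_apply le_add_diff_inverse2)
  hence e: "(par ^^ (b - a)) c1 = c2" using a by simp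
  have "b - a \<noteq> 0" using e ne by auto
  then obtain m where m: "b - a = Suc m" by (cases "b - a") auto
  have "(par ^^ m) (par c1) = c2" using e m by (simp add: funpow_Suc_right del: funpow.simps)
  hence e2: "(par ^^ m) u = c2" using p1 by simp
  hence "(par ^^ Suc m) u = u" using p2 by simp
  moreover have "u \<in> V" using p1 rt unfolding rooted_tree_def by metis
  ultimately have "u = r" using no_cycle[OF rt, of u "Suc m"] by simp
  hence "c2 = r" using e2 funpow_fix[of par r, OF pr] by simp
  thus False using p2 by simp
qed

lemma children_disj:
  assumes rt: "rooted_tree V par r" and c1: "c1 \<in> children V par r u" and c2: "c2 \<in> children V par r u"
    and ne: "c1 \<noteq> c2"
  shows "subtree V par c1 \<inter> subtree V par c2 = {}"
proof (rule ccontr)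
  assume "subtree V par c1 \<inter> subtree V par c2 \<noteq> {}"
  then obtain w a b where h: "w \<in> V" "(par ^^ a) w = c1" "(par ^^ b) w = c2"
    unfolding subtree_def by blast
  show False
  proof (cases "a \<le> b")
    case True
    show False by (rule children_disj_aux[OF rt c1 c2 ne h(2) h(3) True h(1)])
  next
    case False
    hence "b \<le> a" by simp
    show False by (rule children_disj_aux[OF rt c2 c1 ne[symmetric] h(3) h(2) \<open>b \<le> a\<close> h(1)])
  qed
qed


lemma alg_chl: "algorithm2 V par r chl a1 a2 pos \<Longrightarrow> u \<in> V \<Longrightarrow>
   distinct (chl u) \<and> set (chl u) = children V par r u"
  unfolding algorithm2_def by blast

lemma alg_width: "algorithm2 V par r chl a1 a2 pos \<Longrightarrow> u \<in> V \<Longrightarrow> v \<in> set (chl u) \<Longrightarrow>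
  a2 v = a1 v + (a2 u - a1 u) * real (card (subtree V par v)) / (real (card (subtree V par u)) - 1)"
  unfolding algorithm2_def by blast

lemma alg_first: "algorithm2 V par r chl a1 a2 pos \<Longrightarrow> u \<in> V \<Longrightarrow> chl u \<noteq> [] \<Longrightarrow>
  a1 (chl u ! 0) = a1 u"
  unfolding algorithm2_def by blast

lemma alg_next: "algorithm2 V par r chl a1 a2 pos \<Longrightarrow> u \<in> V \<Longrightarrow> 0 < i \<Longrightarrow> i < length (chl u) \<Longrightarrow>
  a1 (chl u ! i) = a2 (chl u ! (i - 1))"
  unfolding algorithm2_def by blast

lemma alg_pos: "algorithm2 V par r chl a1 a2 pos \<Longrightarrow> v \<in> V \<Longrightarrow> v \<noteq> r \<Longrightarrow>
  pos v = (fst (pos (par v)) + fst (P2 (a1 v) (a2 v)), snd (pos (par v)) + snd (P2 (a1 v) (a2 v)))"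
  unfolding algorithm2_def by blast

lemma alg_root: "algorithm2 V par r chl a1 a2 pos \<Longrightarrow> a1 r = 0 \<and> a2 r = pi \<and> pos r = (0,0)"
  unfolding algorithm2_def by blast

lemma child_card_sum:
  assumes rt: "rooted_tree V par r" and alg: "algorithm2 V par r chl a1 a2 pos" and u: "u \<in> V"
  shows "(\<Sum>j<length (chl u). card (subtree V par (chl u ! j))) \<le> card (subtree V par u) - 1"
proof -
  have dc: "distinct (chl u)" "set (chl u) = children V par r u" using alg_chl[OF alg u] by auto
  let ?A = "\<lambda>j. subtree V par (chl u ! j)"
  have "card (\<Union>(?A ` {..<length (chl u)})) = (\<Sum>j<length (chl u). card (?A j))"
  proof (rule card_UN_disjoint)
    show "finite {..<length (chl u)}" by simp
    show "\<forall>i\<in>{..<length (chl u)}. finite (?A i)" using subtree_finite[OF rt] by blast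
    show "\<forall>i\<in>{..<length (chl u)}. \<forall>j\<in>{..<length (chl u)}. i \<noteq> j \<longrightarrow> ?A i \<inter> ?A j = {}"
    proof (intro ballI impI)
      fix i j assume "i \<in> {..<length (chl u)}" "j \<in> {..<length (chl u)}" "i \<noteq> j"
      hence "chl u ! i \<noteq> chl u ! j" "chl u ! i \<in> children V par r u" "chl u ! j \<in> children V par r u"
        using dc nth_eq_iff_index_eq[OF dc(1)] by (auto simp del: set_conv_nth) 
      thus "?A i \<inter> ?A j = {}" using children_disj[OF rt] by blast
    qed
  qed
  moreover have "\<Union>(?A ` {..<length (chl u)}) \<subseteq> subtree V par u - {u}"
  proof
    fix x assume "x \<in> \<Union>(?A ` {..<length (chl u)})"
    then obtain j where j: "j < length (chl u)" "x \<in> ?A j" by auto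
    have "chl u ! j \<in> children V par r u" using dc(2) nth_mem[OF j(1)] by (simp del: set_conv_nth)
    thus "x \<in> subtree V par u - {u}" using child_subtree[OF rt] j(2) by blast
  qed
  hence "card (\<Union>(?A ` {..<length (chl u)})) \<le> card (subtree V par u - {u})"
    by (intro card_mono) (use subtree_finite[OF rt] in auto)
  moreover have "card (subtree V par u - {u}) = card (subtree V par u) - 1"
    using self_in_subtree[OF u] by simp
  ultimately show ?thesis by simp
qed

lemma a1_formula:
  assumes alg: "algorithm2 V par r chl a1 a2 pos" and u: "u \<in> V"
  shows "i < length (chl u) \<Longrightarrow> a1 (chl u ! i) = a1 u + (a2 u - a1 u) *
     (\<Sum>j<i. real (card (subtree V par (chl u ! j)))) / (real (card (subtree V par u)) - 1)"
proof (induction i)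
  case 0
  then show ?case using alg_first[OF alg u] by auto
next
  case (Suc i)
  have h1: "a1 (chl u ! Suc i) = a2 (chl u ! i)" using alg_next[OF alg u, of "Suc i"] Suc.prems by simp
  have h2: "a2 (chl u ! i) = a1 (chl u ! i) + (a2 u - a1 u) *
     real (card (subtree V par (chl u ! i))) / (real (card (subtree V par u)) - 1)"
    by (rule alg_width[OF alg u]) (use Suc.prems in \<open>simp del: set_conv_nth\<close>)
  show ?case using h1 h2 Suc by (simp add: add_divide_distrib distrib_left)
qed

lemma child_interval:
  assumes rt: "rooted_tree V par r" and alg: "algorithm2 V par r chl a1 a2 pos" and u: "u \<in> V"
    and pos: "a1 u < a2 u" and v: "v \<in> children V par r u"
  shows "a1 u \<le> a1 v \<and> a2 v \<le> a2 u \<and>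
     a2 v - a1 v = (a2 u - a1 u) * real (card (subtree V par v)) / (real (card (subtree V par u)) - 1) \<and>
     1 \<le> card (subtree V par v) \<and> card (subtree V par v) + 1 \<le> card (subtree V par u)"
proof -
  have dc: "distinct (chl u)" "set (chl u) = children V par r u" using alg_chl[OF alg u] by auto
  have vV: "v \<in> V" using v unfolding children_def by auto
  have s1: "1 \<le> card (subtree V par v)"
    using self_in_subtree[OF vV] subtree_finite[OF rt] by (metis One_nat_def Suc_leI card_gt_0_iff empty_iff)
  have "subtree V par v \<subseteq> subtree V par u - {u}" by (rule child_subtree[OF rt v])
  hence "card (subtree V par v) \<le> card (subtree V par u - {u})"
    by (intro card_mono) (use subtree_finite[OF rt] in auto)
  moreover have "card (subtree V par u - {u}) = card (subtree V par u) - 1"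
    using self_in_subtree[OF u] by simp
  moreover have "1 \<le> card (subtree V par u)"
    using self_in_subtree[OF u] subtree_finite[OF rt] by (metis One_nat_def Suc_leI card_gt_0_iff empty_iff)
  ultimately have s2: "card (subtree V par v) + 1 \<le> card (subtree V par u)" using s1 by linarith
  obtain i where i: "i < length (chl u)" "v = chl u ! i" using v dc by (metis in_set_conv_nth)
  define D where "D = real (card (subtree V par u)) - 1"
  define phi where "phi = a2 u - a1 u"
  define S where "S = (\<Sum>j<i. real (card (subtree V par (chl u ! j))))"
  have Dpos: "0 < D" using s1 s2 unfolding D_def by linarith
  have phipos: "0 < phi" using pos unfolding phi_def by simp
  have Snn: "0 \<le> S" unfolding S_def by (simp add: sum_nonneg)
  have fa1: "a1 v = a1 u + phi * S / D" using a1_formula[OF alg u i(1)] i unfolding phi_def S_def D_def by simp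
  have fw: "a2 v - a1 v = phi * real (card (subtree V par v)) / D"
    using alg_width[OF alg u, of v] v dc unfolding phi_def D_def by simp
  have "(\<Sum>j<Suc i. card (subtree V par (chl u ! j))) \<le> (\<Sum>j<length (chl u). card (subtree V par (chl u ! j)))"
    by (rule sum_mono2) (use i in auto)
  also have "\<dots> \<le> card (subtree V par u) - 1" by (rule child_card_sum[OF rt alg u])
  finally have "real (\<Sum>j<Suc i. card (subtree V par (chl u ! j))) \<le> real (card (subtree V par u) - 1)"
    by linarith
  hence "S + real (card (subtree V par v)) \<le> D" unfolding S_def D_def using i s2
    by (simp add: of_nat_diff)
  have le1: "a1 u \<le> a1 v" using fa1 Snn Dpos phipos by simp
  have "a2 v = a1 u + phi * (S + real (card (subtree V par v))) / D"
    using fa1 fw by (simp add: add_divide_distrib distrib_left)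
  also have "\<dots> \<le> a1 u + phi * D / D"
    using \<open>S + real (card (subtree V par v)) \<le> D\<close> phipos Dpos
    by (intro add_left_mono divide_right_mono mult_left_mono) auto
  also have "\<dots> = a2 u" using Dpos unfolding phi_def by simp
  finally have le2: "a2 v \<le> a2 u" .
  have fw': "a2 v - a1 v = (a2 u - a1 u) * real (card (subtree V par v)) / (real (card (subtree V par u)) - 1)"
    using fw unfolding phi_def D_def .
  show ?thesis using le1 le2 fw' s1 s2 by (intro conjI)
qed


definition cc :: "nat \<Rightarrow> real" where
  "cc n = (pi/2) * ((real n - real (oddn n)) / (real n - 1))"

lemma cc_ge: assumes "2 \<le> n" shows "pi/2 \<le> cc n"
proof -
  have "real n - 1 \<le> real n - real (oddn n)" by (simp add: oddn_def)
  moreover have "0 < real n - 1" using assms by simp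
  ultimately have "1 \<le> (real n - real (oddn n)) / (real n - 1)" by simp
  hence "pi/2 * 1 \<le> pi/2 * ((real n - real (oddn n)) / (real n - 1))"
    by (intro mult_left_mono) auto
  thus ?thesis unfolding cc_def by simp
qed

lemma par_bound: assumes "2 * s \<le> n" shows "2 * real s \<le> real n - real (oddn n)"
proof -
  have "2 * s + oddn n \<le> n" unfolding oddn_def using assms by presburger
  hence "real (2 * s + oddn n) \<le> real n" by (simp only: of_nat_le_iff)
  thus ?thesis by simp
qed

lemma subtree_comp:
  assumes rt: "rooted_tree V par r" and v: "v \<in> children V par r r"
  shows "subtree V par v \<subseteq> comp_minus V par r v"
proof -
  have pv: "par v = r" "v \<noteq> r" "v \<in> V" using v unfolding children_def by auto
  have pr: "par r = r" "\<forall>x\<in>V. par x \<in> V" using rt unfolding rooted_tree_def by auto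
  let ?R = "\<lambda>a b. tree_adj V par a b \<and> a \<noteq> r \<and> b \<noteq> r"
  have "\<And>w. w \<in> V \<Longrightarrow> (par ^^ a) w = v \<Longrightarrow> ?R\<^sup>*\<^sup>* v w" for a
  proof (induction a)
    case 0 then show ?case by simp
  next
    case (Suc a)
    have e: "(par ^^ a) (par w) = v" using Suc.prems by (simp add: funpow_Suc_right del: funpow.simps)
    have pw: "par w \<in> V" using Suc.prems pr by blast
    have ih: "?R\<^sup>*\<^sup>* v (par w)" using Suc.IH[OF pw e] .
    have "w \<noteq> r"
    proof
      assume "w = r"
      hence "(par ^^ Suc a) r = v" using Suc.prems by simp
      thus False using funpow_fix[of par r "Suc a", OF pr(1)] pv by simp
    qed
    moreover have "par w \<noteq> r" using e funpow_fix[of par r, OF pr(1)] pv by auto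
    moreover have "par w \<noteq> w"
    proof
      assume "par w = w"
      hence "(par ^^ a) w = w" by (induction a) auto
      hence "w = v" using e \<open>par w = w\<close> by simp
      thus False using \<open>par w = w\<close> pv by simp
    qed
    ultimately have step: "?R (par w) w" unfolding tree_adj_def using pw Suc.prems by auto
    show ?case by (rule rtranclp.rtrancl_into_rtrancl[of ?R v "par w" w, OF ih step])
  qed
  thus ?thesis unfolding subtree_def comp_minus_def by blast
qed

lemma comp_finite: "rooted_tree V par r \<Longrightarrow> finite (comp_minus V par r x)"
proof -
  assume rt: "rooted_tree V par r"
  have "comp_minus V par r x \<subseteq> insert x V"
  proof
    fix y assume "y \<in> comp_minus V par r x"
    hence "(\<lambda>a b. tree_adj V par a b \<and> a \<noteq> r \<and> b \<noteq> r)\<^sup>*\<^sup>* x y" unfolding comp_minus_def by simp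
    thus "y \<in> insert x V" by (induction rule: rtranclp_induct) (auto simp: tree_adj_def)
  qed
  thus ?thesis using rt unfolding rooted_tree_def by (metis finite_insert finite_subset)
qed

lemma root_child_width:
  assumes rt: "rooted_tree V par r" and gr: "gravity_root V par r" and n: "card V > 2"
    and v: "v \<in> children V par r r"
  shows "pi * real (card (subtree V par v)) / (real (card V) - 1) \<le> cc (card V)"
proof -
  have vV: "v \<in> V - {r}" using v unfolding children_def by auto
  have "card (subtree V par v) \<le> card (comp_minus V par r v)"
    by (rule card_mono[OF comp_finite[OF rt] subtree_comp[OF rt v]])
  moreover have "real (card (comp_minus V par r v)) \<le> real (card V) / 2"
    using gr vV unfolding gravity_root_def by blast
  ultimately have "2 * card (subtree V par v) \<le> card V" by linarith
  hence h: "2 * real (card (subtree V par v)) \<le> real (card V) - real (oddn (card V))"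
    by (rule par_bound)
  have np: "0 < real (card V) - 1" using n by simp
  have "pi * real (card (subtree V par v)) / (real (card V) - 1)
      = (pi/2) * (2 * real (card (subtree V par v)) / (real (card V) - 1))" by simp
  also have "\<dots> \<le> (pi/2) * ((real (card V) - real (oddn (card V))) / (real (card V) - 1))"
    using h np by (intro mult_left_mono divide_right_mono) auto
  finally show ?thesis unfolding cc_def .
qed

lemma invariant:
  assumes rt: "rooted_tree V par r" and gr: "gravity_root V par r" and n: "card V > 2"
    and alg: "algorithm2 V par r chl a1 a2 pos"
  shows "v \<in> V \<Longrightarrow> 0 \<le> a1 v \<and> a1 v < a2 v \<and> a2 v \<le> pi \<and> (v \<noteq> r \<longrightarrow> a2 v - a1 v \<le> cc (card V))"
proof -
  assume vV: "v \<in> V"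
  obtain k where k: "(par ^^ k) v = r" using rt vV unfolding rooted_tree_def by blast
  have pr: "par r = r" "\<forall>x\<in>V. par x \<in> V" using rt unfolding rooted_tree_def by auto
  have ar: "a1 r = 0" "a2 r = pi" using alg_root[OF alg] by auto
  show ?thesis using vV k
  proof (induction k arbitrary: v)
    case 0
    then show ?case using ar by simp
  next
    case (Suc k)
    show ?case
    proof (cases "v = r")
      case True then show ?thesis using ar by simp
    next
      case False
      define u where "u = par v"
      have uV: "u \<in> V" using Suc.prems pr unfolding u_def by blast
      have ku: "(par ^^ k) u = r" using Suc.prems unfolding u_def by (simp add: funpow_Suc_right del: funpow.simps)
      have IH: "0 \<le> a1 u \<and> a1 u < a2 u \<and> a2 u \<le> pi \<and> (u \<noteq> r \<longrightarrow> a2 u - a1 u \<le> cc (card V))"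
        using Suc.IH[OF uV ku] .
      have vc: "v \<in> children V par r u" using Suc.prems False unfolding children_def u_def by auto
      have ci: "a1 u \<le> a1 v \<and> a2 v \<le> a2 u \<and>
         a2 v - a1 v = (a2 u - a1 u) * real (card (subtree V par v)) / (real (card (subtree V par u)) - 1) \<and>
         1 \<le> card (subtree V par v) \<and> card (subtree V par v) + 1 \<le> card (subtree V par u)"
        using child_interval[OF rt alg uV _ vc] IH by blast
      define sv where "sv = real (card (subtree V par v))"
      define su where "su = real (card (subtree V par u))"
      have svp: "1 \<le> sv" "sv \<le> su - 1" using ci unfolding sv_def su_def by auto
      have wid: "a2 v - a1 v = (a2 u - a1 u) * sv / (su - 1)" using ci unfolding sv_def su_def by simp
      have wpos: "0 < a2 v - a1 v" unfolding wid using IH svp by simp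
      have wle: "a2 v - a1 v \<le> a2 u - a1 u"
      proof -
        have "sv / (su - 1) \<le> 1" using svp by simp
        hence "(a2 u - a1 u) * (sv / (su - 1)) \<le> (a2 u - a1 u) * 1"
          using IH by (intro mult_left_mono) auto
        thus ?thesis unfolding wid by simp
      qed
      have "a2 v - a1 v \<le> cc (card V)"
      proof (cases "u = r")
        case True
        have "su = real (card V)" unfolding su_def True subtree_root[OF rt] ..
        hence "a2 v - a1 v = pi * real (card (subtree V par v)) / (real (card V) - 1)"
          unfolding wid sv_def using True ar by simp
        also have "\<dots> \<le> cc (card V)" using root_child_width[OF rt gr n] vc True by blast
        finally show ?thesis .
      next
        case False
        then show ?thesis using IH wle by simp
      qed
      then show ?thesis using ci IH wpos by auto
    qed
  qed
qed


lemma step_arith: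
  fixes dy Y th c sv su phi :: real
  assumes "0 < th" "th = phi * sv / (su - 1)" "1 \<le> sv" "sv \<le> su - 1" "0 < phi"
    and "dy * th \<le> c" "Y \<le> (sv - 1) * c / th"
  shows "Y + dy \<le> (su - 1) * c / phi"
proof -
  have "dy \<le> c / th" using assms(1,6) by (simp add: pos_le_divide_eq)
  hence "Y + dy \<le> (sv - 1) * c / th + c / th" using assms by linarith
  also have "\<dots> = ((sv - 1) * c + c) / th" by (simp only: add_divide_distrib)
  also have "\<dots> = sv * c / th" by (simp add: algebra_simps)
  also have "\<dots> = (su - 1) * c / phi"
  proof -
    have p: "0 < su - 1" "0 < sv" using assms by linarith+
    have "sv * c / th = sv * c / (phi * sv / (su - 1))" using assms(2) by simp
    also have "\<dots> = (su - 1) * c / phi" using p assms(5) by (simp add: field_simps)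
    finally show ?thesis .
  qed
  finally show ?thesis .
qed

lemma relative:
  assumes rt: "rooted_tree V par r" and gr: "gravity_root V par r" and n: "card V > 2"
    and alg: "algorithm2 V par r chl a1 a2 pos"
  shows "w \<in> V \<Longrightarrow> (par ^^ k) w = u \<Longrightarrow>
    0 \<le> snd (pos w) - snd (pos u) \<and>
    snd (pos w) - snd (pos u) \<le> (real (card (subtree V par u)) - 1) * cc (card V) / (a2 u - a1 u) \<and>
    \<bar>fst (pos w) - fst (pos u)\<bar> \<le> (real (card (subtree V par u)) - 1) * cc (card V) / (a2 u - a1 u)"
proof (induction k arbitrary: u)
  case 0
  have uV: "u \<in> V" using 0 by simp
  have "1 \<le> card (subtree V par u)"
    using self_in_subtree[OF uV] subtree_finite[OF rt] by (metis One_nat_def Suc_leI card_gt_0_iff empty_iff)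
  moreover have "0 < a2 u - a1 u" using invariant[OF rt gr n alg uV] by simp
  moreover have "0 \<le> cc (card V)" using cc_ge[of "card V"] n pi_gt_zero by linarith
  ultimately show ?case using 0 by simp
next
  case (Suc k)
  define v where "v = (par ^^ k) w"
  have pr: "par r = r" "\<forall>x\<in>V. par x \<in> V" using rt unfolding rooted_tree_def by auto
  have vV: "v \<in> V" unfolding v_def by (rule rt_closed[OF rt Suc.prems(1)])
  have uv: "u = par v" using Suc.prems(2) unfolding v_def by simp
  show ?case
  proof (cases "v = r")
    case True
    hence "u = v" using uv pr by simp
    thus ?thesis using Suc.IH[OF Suc.prems(1) v_def[symmetric]] by simp
  next
    case False
    have uV: "u \<in> V" using uv vV pr by simp
    have vc: "v \<in> children V par r u" using False vV uv unfolding children_def by auto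
    define sv where "sv = real (card (subtree V par v))"
    define su where "su = real (card (subtree V par u))"
    define th where "th = a2 v - a1 v"
    define phi where "phi = a2 u - a1 u"
    define c where "c = cc (card V)"
    have phipos: "0 < phi" using invariant[OF rt gr n alg uV] unfolding phi_def by simp
    have ci': "th = phi * sv / (su - 1)" "1 \<le> sv" "sv \<le> su - 1"
      using child_interval[OF rt alg uV _ vc] phipos unfolding th_def phi_def sv_def su_def by auto
    have inv: "0 \<le> a1 v" "a1 v < a2 v" "a2 v \<le> pi" "th \<le> c"
      using invariant[OF rt gr n alg vV] False unfolding th_def c_def by auto
    have thpos: "0 < th" using inv unfolding th_def by simp
    have cge: "pi/2 \<le> c" unfolding c_def by (rule cc_ge) (use n in simp)
    have eb: "0 \<le> snd (P2 (a1 v) (a2 v)) \<and> snd (P2 (a1 v) (a2 v)) * th \<le> c \<and>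
        \<bar>fst (P2 (a1 v) (a2 v))\<bar> * th \<le> c"
      using P2_bound[OF inv(1) inv(2) inv(3) _ cge] inv(4) unfolding th_def by blast
    have pv: "pos v = (fst (pos u) + fst (P2 (a1 v) (a2 v)), snd (pos u) + snd (P2 (a1 v) (a2 v)))"
      using alg_pos[OF alg vV False] uv by simp
    have ih: "0 \<le> snd (pos w) - snd (pos v)"
      "snd (pos w) - snd (pos v) \<le> (sv - 1) * c / th"
      "\<bar>fst (pos w) - fst (pos v)\<bar> \<le> (sv - 1) * c / th"
      using Suc.IH[OF Suc.prems(1) v_def[symmetric]] unfolding sv_def c_def th_def by auto
    have y: "snd (pos w) - snd (pos u) = (snd (pos w) - snd (pos v)) + snd (P2 (a1 v) (a2 v))"
      using pv by simp
    have x: "\<bar>fst (pos w) - fst (pos u)\<bar> \<le> \<bar>fst (pos w) - fst (pos v)\<bar> + \<bar>fst (P2 (a1 v) (a2 v))\<bar>"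
      using pv by simp
    have b1: "snd (pos w) - snd (pos u) \<le> (su - 1) * c / phi"
      unfolding y by (rule step_arith[OF thpos ci'(1) ci'(2) ci'(3) phipos _ ih(2)]) (use eb in simp)
    have b2: "\<bar>fst (pos w) - fst (pos v)\<bar> + \<bar>fst (P2 (a1 v) (a2 v))\<bar> \<le> (su - 1) * c / phi"
      by (rule step_arith[OF thpos ci'(1) ci'(2) ci'(3) phipos _ ih(3)]) (use eb in simp)
    have b0: "0 \<le> snd (pos w) - snd (pos u)" unfolding y using ih(1) eb by simp
    show ?thesis using b0 b1 b2 x unfolding su_def c_def phi_def by linarith
  qed
qed

theorem lemma12:
  fixes V :: "'a set" and par :: "'a \<Rightarrow> 'a" and r u :: 'a
    and chl :: "'a \<Rightarrow> 'a list" and a1 a2 :: "'a \<Rightarrow> real" and pos :: "'a \<Rightarrow> real \<times> real"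
  assumes "rooted_tree V par r"
    and "card V > 2"
    and "gravity_root V par r"
    and "algorithm2 V par r chl a1 a2 pos"
    and "u \<in> V" and "fst (pos u) = 0"
  shows "\<forall>w \<in> subtree V par u.
      0 \<le> snd (pos w) - snd (pos u) \<and>
      snd (pos w) - snd (pos u) \<le>
        (real (card (subtree V par u)) - 1) * (pi / 2) *
        ((real (card V) - real (oddn (card V))) / (real (card V) - 1)) * (1 / (a2 u - a1 u)) \<and>
      \<bar>fst (pos w)\<bar> \<le>
        (real (card (subtree V par u)) - 1) * (pi / 2) *
        ((real (card V) - real (oddn (card V))) / (real (card V) - 1)) * (1 / (a2 u - a1 u))"
proof
  fix w assume "w \<in> subtree V par u"
  then obtain k where k: "w \<in> V" "(par ^^ k) w = u" unfolding subtree_def by blast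
  have e: "(real (card (subtree V par u)) - 1) * (pi / 2) *
        ((real (card V) - real (oddn (card V))) / (real (card V) - 1)) * (1 / (a2 u - a1 u))
      = (real (card (subtree V par u)) - 1) * cc (card V) / (a2 u - a1 u)"
    unfolding cc_def by simp
  show "0 \<le> snd (pos w) - snd (pos u) \<and>
      snd (pos w) - snd (pos u) \<le>
        (real (card (subtree V par u)) - 1) * (pi / 2) *
        ((real (card V) - real (oddn (card V))) / (real (card V) - 1)) * (1 / (a2 u - a1 u)) \<and>
      \<bar>fst (pos w)\<bar> \<le>
        (real (card (subtree V par u)) - 1) * (pi / 2) *
        ((real (card V) - real (oddn (card V))) / (real (card V) - 1)) * (1 / (a2 u - a1 u))"
    unfolding e using relative[OF assms(1,3,2,4) k] assms(6) by simp
qed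

end
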